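(* For all $z,w\in\overline{\mathbb C}_{\mathrm{cut}}$ with $zw\neq1$ and all $p,r\in\mathbb Z$, the following holds in $\widehat{\mathcal P}(\mathbb C)$: $$\{z;2p\}+\{w;2r\}=\begin{cases}\{zw+0i;2(p+r-1)\}&\text{if }\mathrm{Arg}\,z+\mathrm{Arg}\,w\le-\pi,\\ \{zw+0i;2(p+r)\}&\text{if }-\pi<\mathrm{Arg}\,z+\mathrm{Arg}\,w\le\pi,\\ \{zw+0i;2(p+r+1)\}&\text{if }\pi<\mathrm{Arg}\,z+\mathrm{Arg}\,w.\end{cases}$$ Here $zw+0i$ denotes $zw$ if $zw\in\mathbb C_{\mathrm{cut}}$ or $zw\in(0,1)$, and the upper boundary point $zw+0i$ if $zw\in(-\infty,0)\cup(1,\infty)$.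
   Context: Let $\mathbb C_{\mathrm{cut}}=\mathbb C\setminus((-\infty,0]\cup[1,\infty))$ and let $\overline{\mathbb C}_{\mathrm{cut}}$ be $\mathbb C_{\mathrm{cut}}$ together with, for each $x\in(-\infty,0)\cup(1,\infty)$, two boundary points $x\pm0i=\lim_{t\searrow0}(x\pm ti)$. The principal branches of $\mathrm{Log}$ and $\mathrm{Arg}=\mathrm{Im}\,\mathrm{Log}$ are extended to $\overline{\mathbb C}_{\mathrm{cut}}$ by continuity from the respective side (so $\mathrm{Arg}(x-0i)=-\pi$ and $\mathrm{Arg}(x+0i)=\pi$ for $x<0$). Let $\widehat{\mathbb C}$ be the quotient of $\overline{\mathbb C}_{\mathrm{cut}}\times(2\mathbb Z)^2$ by $(x+0i,2p,2q)\sim(x-0i,2p+2,2q)$ for $x\in(-\infty,0)$ and $(x+0i,2p,2q)\sim(x-0i,2p,2q+2)$ for $x\in(1,\infty)$ ($p,q\in\mathbb Z$); classes are written $(z;2p,2q)$, and $\hat\pi(z;2p,2q)=z$. Let $\mathrm{FT}=\{(x,y,\tfrac yx,\tfrac{1-1/x}{1-1/y},\tfrac{1-x}{1-y}) : x\neq y\in\mathbb C\setminus\{0,1\}\}$, $\mathrm{FT}^+$ the subset where all five entries have positive imaginary part, and $\widehat{\mathrm{FT}}$ the connected component of $\hat\pi^{-1}(\mathrm{FT})\subset\widehat{\mathbb C}^5$ containing all $((z_0;0,0),\dots,(z_4;0,0))$ with $(z_0,\dots,z_4)\in\mathrm{FT}^+$. The extended pre-Bloch group $\widehat{\mathcal P}(\mathbb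 C)$ is the quotient of the free abelian group $\mathbb Z[\widehat{\mathbb C}]$ by the subgroup generated by all $\sum_{k=0}^4(-1)^k[\hat z_k]$ with $(\hat z_0,\dots,\hat z_4)\in\widehat{\mathrm{FT}}$; the image of $(z;2p,2q)$ is denoted $[z;2p,2q]$. For $z\in\overline{\mathbb C}_{\mathrm{cut}}$ and $p\in\mathbb Z$ put $\{z;2p\}=[z;2p,2]-[z;2p,0]\in\widehat{\mathcal P}(\mathbb C)$ (in $\widehat{\mathcal P}(\mathbb C)$ this equals $[z;2p,2q]-[z;2p,2q-2]$ for every $q\in\mathbb Z$). *)

theory Defs
  imports "HOL-Analysis.Analysis"
begin

definition Ccut :: "complex set" where
  "Ccut = - (complex_of_real ` ({..0} \<union> {1..}))"

text \<open>A point of the closed cut plane is a pair (z, lower): for z in Ccut the flag is False;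
  for z = x real with x < 0 or x > 1 the pair (x, False) is the upper boundary point x+0i
  and (x, True) is the lower boundary point x-0i.\<close>

type_synonym cpt = "complex \<times> bool"

definition Cbar :: "cpt set" where
  "Cbar = {(z, False) | z. z \<in> Ccut} \<union>
          {(complex_of_real x, b) | x b. x < 0 \<or> 1 < x}"

text \<open>Principal Log extended to the boundary by continuity from the respective side.\<close>
definition LogB :: "cpt \<Rightarrow> complex" where
  "LogB zb = (if snd zb \<and> Im (fst zb) = 0 \<and> Re (fst zb) < 0
              then Ln (fst zb) - 2 * pi * \<i> else Ln (fst zb))"

definition ArgB :: "cpt \<Rightarrow> real" where
  "ArgB zb = Im (LogB zb)"

text \<open>Principal Log of 1 - z, extended to the boundary by continuity from the respective side.\<close>
definition Log1mB :: "cpt \<Rightarrow> complex" where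
  "Log1mB zb = (if \<not> snd zb \<and> Im (fst zb) = 0 \<and> 1 < Re (fst zb)
                then Ln (1 - fst zb) - 2 * pi * \<i> else Ln (1 - fst zb))"

text \<open>We model the quotient C-hat concretely as the Riemann surface
  {(u,v). exp u + exp v = 1} in C^2 (with subspace topology); the class (z;2p,2q)
  corresponds to (Log z + 2 pi i p, Log(1-z) - 2 pi i q). This map realizes exactly the
  gluings (x+0i,2p,2q) ~ (x-0i,2p+2,2q) for x<0 and (x+0i,2p,2q) ~ (x-0i,2p,2q+2) for x>1,
  and hat-pi corresponds to (u,v) |-> exp u.\<close>

type_synonym hpt = "complex \<times> complex"

definition Chat :: "hpt set" where
  "Chat = {(u, v). exp u + exp v = 1}"

definition hatpt :: "cpt \<Rightarrow> int \<Rightarrow> int \<Rightarrow> hpt" where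
  "hatpt zb p q = (LogB zb + 2 * pi * \<i> * of_int p, Log1mB zb - 2 * pi * \<i> * of_int q)"

definition hatpi :: "hpt \<Rightarrow> complex" where
  "hatpi a = exp (fst a)"

definition FT :: "(complex \<times> complex \<times> complex \<times> complex \<times> complex) set" where
  "FT = {(x, y, y / x, (1 - 1/x) / (1 - 1/y), (1 - x) / (1 - y)) | x y.
           x \<noteq> y \<and> x \<notin> {0, 1} \<and> y \<notin> {0, 1}}"

definition FTplus :: "(complex \<times> complex \<times> complex \<times> complex \<times> complex) set" where
  "FTplus = {(z0, z1, z2, z3, z4) \<in> FT.
     0 < Im z0 \<and> 0 < Im z1 \<and> 0 < Im z2 \<and> 0 < Im z3 \<and> 0 < Im z4}"

definition FTpre :: "(hpt \<times> hpt \<times> hpt \<times> hpt \<times> hpt) set" where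
  "FTpre = {(a0, a1, a2, a3, a4).
     a0 \<in> Chat \<and> a1 \<in> Chat \<and> a2 \<in> Chat \<and> a3 \<in> Chat \<and> a4 \<in> Chat \<and>
     (hatpi a0, hatpi a1, hatpi a2, hatpi a3, hatpi a4) \<in> FT}"

definition lift0 :: "complex \<times> complex \<times> complex \<times> complex \<times> complex
                      \<Rightarrow> hpt \<times> hpt \<times> hpt \<times> hpt \<times> hpt" where
  "lift0 t = (case t of (z0, z1, z2, z3, z4) \<Rightarrow>
     (hatpt (z0, False) 0 0, hatpt (z1, False) 0 0, hatpt (z2, False) 0 0,
      hatpt (z3, False) 0 0, hatpt (z4, False) 0 0))"

definition FThat :: "(hpt \<times> hpt \<times> hpt \<times> hpt \<times> hpt) set" where
  "FThat = {t. \<exists>z \<in> FTplus. connected_component FTpre (lift0 z) t}"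

text \<open>Elements of the free abelian group Z[C-hat] as finitely supported integer functions.\<close>

definition gen :: "hpt \<Rightarrow> hpt \<Rightarrow> int" where
  "gen a = (\<lambda>x. if x = a then 1 else 0)"

definition fiveterm :: "hpt \<times> hpt \<times> hpt \<times> hpt \<times> hpt \<Rightarrow> hpt \<Rightarrow> int" where
  "fiveterm t = (case t of (a0, a1, a2, a3, a4) \<Rightarrow>
     (\<lambda>x. gen a0 x - gen a1 x + gen a2 x - gen a3 x + gen a4 x))"

inductive_set FTrels :: "(hpt \<Rightarrow> int) set" where
  zero: "(\<lambda>_. 0) \<in> FTrels"
| add: "f \<in> FTrels \<Longrightarrow> t \<in> FThat \<Longrightarrow> (\<lambda>x. f x + fiveterm t x) \<in> FTrels"
| sub: "f \<in> FTrels \<Longrightarrow> t \<in> FThat \<Longrightarrow> (\<lambda>x. f x - fiveterm t x) \<in> FTrels"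

definition Phat_eq :: "(hpt \<Rightarrow> int) \<Rightarrow> (hpt \<Rightarrow> int) \<Rightarrow> bool" where
  "Phat_eq f g \<longleftrightarrow> (\<lambda>x. f x - g x) \<in> FTrels"

definition padd :: "(hpt \<Rightarrow> int) \<Rightarrow> (hpt \<Rightarrow> int) \<Rightarrow> hpt \<Rightarrow> int" where
  "padd f g = (\<lambda>x. f x + g x)"

text \<open>[z;2p,2q]\<close>
definition brk :: "cpt \<Rightarrow> int \<Rightarrow> int \<Rightarrow> hpt \<Rightarrow> int" where
  "brk z p q = gen (hatpt z p q)"

text \<open>{z;2p} = [z;2p,2] - [z;2p,0]\<close>
definition curly :: "cpt \<Rightarrow> int \<Rightarrow> hpt \<Rightarrow> int" where
  "curly z p = (\<lambda>x. brk z p 1 x - brk z p 0 x)"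

text \<open>zw+0i: the upper boundary point when zw lies on a cut, zw itself otherwise.\<close>
definition plus0i :: "complex \<Rightarrow> cpt" where
  "plus0i u = (u, False)"

end

theory Submission imports Defs begin

definition Cfree :: "(complex \<times> complex \<times> complex \<times> complex \<times> complex) set" where
 "Cfree = {(u0,v0,u1,v1,v2). exp u0 + exp v0 = 1 \<and> exp u1 + exp v1 = 1 \<and> exp v2 = 1 - exp (u1 - u0)}"

lemma lift_log:
  fixes f :: "real \<Rightarrow> complex"
  assumes "continuous_on {0..1::real} f" "\<And>t. t \<in> {0..1} \<Longrightarrow> f t \<noteq> 0" "exp L0 = f 0"
  obtains g where "continuous_on {0..1} g" "\<And>t. t\<in>{0..1} \<Longrightarrow> exp (g t) = f t" "g 0 = L0"
proof -
  obtain h where h: "continuous_on {0..1} h" "\<And>t. t \<in> {0..1} \<Longrightarrow> f t = exp (h t)"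
  proof (rule continuous_logarithm_on_contractible[OF assms(1)])
    show "contractible {0..1::real}" by (simp add: convex_imp_contractible)
  qed (use assms(2) in auto)
  have e: "exp (h 0) = exp L0" using h(2)[of 0] assms(3) by simp
  show ?thesis
  proof (rule that[of "\<lambda>t. h t + (L0 - h 0)"])
    show "continuous_on {0..1} (\<lambda>t. h t + (L0 - h 0))" by (intro continuous_intros h(1))
    show "exp (h t + (L0 - h 0)) = f t" if "t \<in> {0..1}" for t
      using h(2)[OF that] e by (simp add: exp_add exp_diff)
  qed simp
qed

lemma move1:
  assumes c: "(u0,v0,u1,v1,v2) \<in> Cfree" and p: "path \<gamma>" "path_image \<gamma> \<subseteq> -{0,1,exp u0}" "pathstart \<gamma> = exp u1"
  shows "\<exists>u1' v1' v2'. path_component Cfree (u0,v0,u1,v1,v2) (u0,v0,u1',v1',v2') \<and> exp u1' = pathfinish \<gamma>"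
proof -
  have g: "continuous_on {0..1} \<gamma>" using p(1) by (simp add: path_def)
  have im: "\<gamma> t \<noteq> 0" "\<gamma> t \<noteq> 1" "\<gamma> t \<noteq> exp u0" if "t \<in> {0..1}" for t
    using p(2) that unfolding path_image_def by blast+
  have s: "\<gamma> 0 = exp u1" using p(3) by (simp add: pathstart_def)
  obtain g1 where g1: "continuous_on {0..1} g1" "\<And>t. t\<in>{0..1} \<Longrightarrow> exp (g1 t) = \<gamma> t" "g1 0 = u1"
    using lift_log[OF g, of u1] im s by auto
  obtain g2 where g2: "continuous_on {0..1} g2" "\<And>t. t\<in>{0..1} \<Longrightarrow> exp (g2 t) = 1 - \<gamma> t" "g2 0 = v1"
  proof (rule lift_log[of "\<lambda>t. 1 - \<gamma> t" v1])
    show "continuous_on {0..1} (\<lambda>t. 1 - \<gamma> t)" by (intro continuous_intros g)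
  qed (use im s c in \<open>auto simp: Cfree_def algebra_simps\<close>)
  obtain g3 where g3: "continuous_on {0..1} g3" "\<And>t. t\<in>{0..1} \<Longrightarrow> exp (g3 t) = 1 - \<gamma> t / exp u0" "g3 0 = v2"
  proof (rule lift_log[of "\<lambda>t. 1 - \<gamma> t / exp u0" v2])
    show "continuous_on {0..1} (\<lambda>t. 1 - \<gamma> t / exp u0)" by (intro continuous_intros g) auto
  qed (use im s c in \<open>auto simp: Cfree_def algebra_simps exp_diff\<close>)
  define q where "q = (\<lambda>t. (u0, v0, g1 t, g2 t, g3 t))"
  have "path q" unfolding q_def path_def by (intro continuous_intros g1 g2 g3)
  moreover have "path_image q \<subseteq> Cfree"
    using c g1 g2 g3 by (auto simp: q_def path_image_def Cfree_def exp_diff)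
  moreover have "pathstart q = (u0,v0,u1,v1,v2)" using g1 g2 g3 by (simp add: q_def pathstart_def)
  ultimately have "path_component Cfree (u0,v0,u1,v1,v2) (u0,v0,g1 1,g2 1,g3 1)"
    unfolding path_component_def by (auto simp: q_def pathfinish_def)
  then show ?thesis using g1(2)[of 1] by (auto simp: pathfinish_def)
qed

lemma move0:
  assumes c: "(u0,v0,u1,v1,v2) \<in> Cfree" and p: "path \<gamma>" "path_image \<gamma> \<subseteq> -{0,1,exp u1}" "pathstart \<gamma> = exp u0"
  shows "\<exists>u0' v0' v2'. path_component Cfree (u0,v0,u1,v1,v2) (u0',v0',u1,v1,v2') \<and> exp u0' = pathfinish \<gamma>"
proof -
  have g: "continuous_on {0..1} \<gamma>" using p(1) by (simp add: path_def)
  have im: "\<gamma> t \<noteq> 0" "\<gamma> t \<noteq> 1" "\<gamma> t \<noteq> exp u1" if "t \<in> {0..1}" for t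
    using p(2) that unfolding path_image_def by blast+
  have s: "\<gamma> 0 = exp u0" using p(3) by (simp add: pathstart_def)
  obtain g1 where g1: "continuous_on {0..1} g1" "\<And>t. t\<in>{0..1} \<Longrightarrow> exp (g1 t) = \<gamma> t" "g1 0 = u0"
    using lift_log[OF g, of u0] im s by auto
  obtain g2 where g2: "continuous_on {0..1} g2" "\<And>t. t\<in>{0..1} \<Longrightarrow> exp (g2 t) = 1 - \<gamma> t" "g2 0 = v0"
  proof (rule lift_log[of "\<lambda>t. 1 - \<gamma> t" v0])
    show "continuous_on {0..1} (\<lambda>t. 1 - \<gamma> t)" by (intro continuous_intros g)
  qed (use im s c in \<open>auto simp: Cfree_def algebra_simps\<close>)
  obtain g3 where g3: "continuous_on {0..1} g3" "\<And>t. t\<in>{0..1} \<Longrightarrow> exp (g3 t) = 1 - exp u1 / \<gamma> t" "g3 0 = v2"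
  proof (rule lift_log[of "\<lambda>t. 1 - exp u1 / \<gamma> t" v2])
    show "continuous_on {0..1} (\<lambda>t. 1 - exp u1 / \<gamma> t)" by (intro continuous_intros g) (use im in auto)
    show "1 - exp u1 / \<gamma> t \<noteq> 0" if "t \<in> {0..1}" for t using im[OF that] by (auto simp: field_simps)
    show "exp v2 = 1 - exp u1 / \<gamma> 0" using s c by (simp add: Cfree_def exp_diff)
  qed (blast intro: that)
  define q where "q = (\<lambda>t. (g1 t, g2 t, u1, v1, g3 t))"
  have "path q" unfolding q_def path_def by (intro continuous_intros g1 g2 g3)
  moreover have "path_image q \<subseteq> Cfree"
    using c g1 g2 g3 by (auto simp: q_def path_image_def Cfree_def exp_diff)
  moreover have "pathstart q = (u0,v0,u1,v1,v2)" using g1 g2 g3 by (simp add: q_def pathstart_def)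
  ultimately have "path_component Cfree (u0,v0,u1,v1,v2) (g1 1,g2 1,u1,v1,g3 1)"
    unfolding path_component_def by (auto simp: q_def pathfinish_def)
  then show ?thesis using g1(2)[of 1] by (auto simp: pathfinish_def)
qed

lemma pc_C:
  fixes a b :: complex and F :: "complex set"
  assumes "finite F" "a \<notin> F" "b \<notin> F"
  obtains \<gamma> where "path \<gamma>" "path_image \<gamma> \<subseteq> -F" "pathstart \<gamma> = a" "pathfinish \<gamma> = b"
proof -
  have "path_connected (- F)"
    by (rule path_connected_complement_countable) (auto simp: assms uncountable_infinite countable_finite)
  then show ?thesis using assms that unfolding path_connected_def by blast
qed

lemma Cfree_ne:
  assumes "(u0,v0,u1,v1,v2) \<in> Cfree"
  shows "exp u0 \<noteq> 1" "exp u1 \<noteq> 1" "exp u1 \<noteq> exp u0"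
proof -
  have e: "exp u0 + exp v0 = 1" "exp u1 + exp v1 = 1" "exp v2 = 1 - exp u1 / exp u0"
    using assms by (auto simp: Cfree_def exp_diff)
  show "exp u0 \<noteq> 1" using e(1) by (metis add_cancel_right_right exp_not_eq_zero)
  show "exp u1 \<noteq> 1" using e(2) by (metis add_cancel_right_right exp_not_eq_zero)
  show "exp u1 \<noteq> exp u0" using e(3) by auto
qed

lemma to_fiber:
  assumes c: "c \<in> Cfree" and c0: "c0 \<noteq> 0" "c0 \<noteq> 1" and c1: "c1 \<noteq> 0" "c1 \<noteq> 1" "c1 \<noteq> c0"
  shows "\<exists>d. path_component Cfree c d \<and> exp (fst d) = c0 \<and> exp (fst (snd (snd d))) = c1"
proof -
  obtain u0 v0 u1 v1 v2 where cd: "c = (u0,v0,u1,v1,v2)" by (cases c) auto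
  have ne: "exp u0 \<noteq> 1" "exp u1 \<noteq> 1" "exp u1 \<noteq> exp u0" using Cfree_ne c cd by auto
  obtain m :: complex where m: "m \<notin> {0,1,exp u0,c0}"
    using ex_new_if_finite[of "{0,1,exp u0,c0}"] infinite_UNIV_char_0 by auto
  have "exp u1 \<notin> {0,1,exp u0}" "m \<notin> {0,1,exp u0}" using ne m by auto
  then obtain \<gamma>1 where g1: "path \<gamma>1" "path_image \<gamma>1 \<subseteq> -{0,1,exp u0}" "pathstart \<gamma>1 = exp u1" "pathfinish \<gamma>1 = m"
    using pc_C[of "{0,1,exp u0}" "exp u1" "m"] by auto
  obtain u1' v1' v2' where s1: "path_component Cfree c (u0,v0,u1',v1',v2')" "exp u1' = m"
    using move1[OF c[unfolded cd] g1(1-3)] g1(4) cd by auto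
  have c': "(u0,v0,u1',v1',v2') \<in> Cfree" using s1(1) path_component_mem(2) by blast
  have "exp u0 \<notin> {0,1,exp u1'}" "c0 \<notin> {0,1,exp u1'}" using ne m c0 s1(2) by auto
  then obtain \<gamma>2 where g2: "path \<gamma>2" "path_image \<gamma>2 \<subseteq> -{0,1,exp u1'}" "pathstart \<gamma>2 = exp u0" "pathfinish \<gamma>2 = c0"
    using pc_C[of "{0,1,exp u1'}" "exp u0" "c0"] by auto
  obtain u0' v0' v2'' where s2: "path_component Cfree (u0,v0,u1',v1',v2') (u0',v0',u1',v1',v2'')" "exp u0' = c0"
    using move0[OF c' g2(1-3)] g2(4) by auto
  have c'': "(u0',v0',u1',v1',v2'') \<in> Cfree" using s2(1) path_component_mem(2) by blast
  have "exp u1' \<notin> {0,1,exp u0'}" "c1 \<notin> {0,1,exp u0'}" using m c1 s1(2) s2(2) by auto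
  then obtain \<gamma>3 where g3: "path \<gamma>3" "path_image \<gamma>3 \<subseteq> -{0,1,exp u0'}" "pathstart \<gamma>3 = exp u1'" "pathfinish \<gamma>3 = c1"
    using pc_C[of "{0,1,exp u0'}" "exp u1'" "c1"] by auto
  obtain u1'' v1'' v2''' where s3: "path_component Cfree (u0',v0',u1',v1',v2'') (u0',v0',u1'',v1'',v2''')" "exp u1'' = c1"
    using move1[OF c'' g3(1-3)] g3(4) by auto
  show ?thesis
    using path_component_trans[OF path_component_trans[OF s1(1) s2(1)] s3(1)] s2(2) s3(2)
    by (intro exI[of _ "(u0',v0',u1'',v1'',v2''')"]) auto
qed

definition E :: "real \<Rightarrow> complex" where "E t = exp (\<i> * of_real (2*pi*t))"

lemma E0 [simp]: "E 0 = 1" and E1 [simp]: "E 1 = 1" and normE [simp]: "norm (E t) = 1"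
  and Ene [simp]: "E t \<noteq> 0"
  by (simp_all add: E_def) (metis exp_two_pi_i' mult.commute of_real_mult of_real_numeral)

lemma contE [continuous_intros]: "continuous_on S E"
  unfolding E_def by (intro continuous_intros)

lemma Re_pos_1q: fixes q F :: complex shows "norm q < 1 \<Longrightarrow> norm F = 1 \<Longrightarrow> 0 < Re (1 + q * F)"
proof -
  assume a: "norm q < 1" "norm F = 1"
  have "\<bar>Re (q*F)\<bar> \<le> norm (q*F)" by (rule abs_Re_le_cmod)
  also have "\<dots> < 1" using a by (simp add: norm_mult)
  finally show ?thesis by simp
qed

lemma ne_1q: fixes q F :: complex shows "norm q < 1 \<Longrightarrow> norm F = 1 \<Longrightarrow> 1 + q * F \<noteq> 0"
  using Re_pos_1q by fastforce

lemma cont_Ln1q [continuous_intros]: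
  assumes "norm q < 1" "continuous_on {0..1} F" "\<And>t. norm (F t) = 1"
  shows "continuous_on {0..1} (\<lambda>t. Ln (1 + q * F t))"
proof (rule continuous_on_Ln')
  show "continuous_on {0..1} (\<lambda>t. 1 + q * F t)" by (intro continuous_intros assms)
  show "1 + q * F t \<notin> \<real>\<^sub>\<le>\<^sub>0" if "t \<in> {0..1}" for t
    using Re_pos_1q[OF assms(1) assms(3)[of t]] by (auto simp: complex_nonpos_Reals_iff)
qed

lemma expL: fixes q F :: complex shows "norm q < 1 \<Longrightarrow> norm F = 1 \<Longrightarrow> exp (Ln (1 + q*F) - Ln (1+q)) = (1+q*F)/(1+q)"
  using ne_1q[of q F] ne_1q[of q 1] by (simp add: exp_diff)

lemma expL2: fixes q F a :: complex shows "norm q < 1 \<Longrightarrow> norm F = 1 \<Longrightarrow>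
  exp (a + (Ln (1 + q*F) - Ln (1+q))) = exp a * ((1+q*F)/(1+q))"
  by (simp add: exp_add expL)

lemma cancel3: fixes a b d X :: complex assumes "a \<noteq> 0" "d \<noteq> 0" shows "(a/b) * ((X/d)/(a/d)) = X/b"
  using assms by (simp add: field_simps)

lemma alg5: fixes c0 c1 e X a k :: complex
  assumes "c0 \<noteq> 0" "e \<noteq> 0" "k \<noteq> 0" "a \<noteq> 0" "X \<noteq> 0"
  shows "(-a/c0) * e * (((c1 - X)/(k*e)) / (a/k)) / (X/c0) = 1 - c1/X"
proof -
  have 3: "((c1 - X)/(k*e)) / (a/k) = (c1 - X)/(e*a)" using assms by (simp add: field_simps)
  have 4: "(-a/c0) * e * ((c1 - X)/(e*a)) = -(c1 - X)/c0" using assms by (simp add: field_simps)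
  have 5: "(-(c1 - X)/c0) / (X/c0) = 1 - c1/X" using assms by (simp add: field_simps)
  show ?thesis unfolding 3 4 5 ..
qed

lemma alg_h2: fixes c0 c1 e :: complex assumes "c0 \<noteq> 1" "e \<noteq> 0"
  shows "1 + - ((1 - c1)/(1 - c0)) * inverse e = (c1 - (1 - (1-c0)*e))/((1-c0)*e)"
  using assms by (simp add: field_simps)

lemma loop_pc:
  fixes d0 d1 d2 d3 d4 :: "real \<Rightarrow> complex"
  assumes c: "(u0,v0,u1,v1,v2) \<in> Cfree"
    and d: "continuous_on {0..1} d0" "continuous_on {0..1} d1" "continuous_on {0..1} d2"
      "continuous_on {0..1} d3" "continuous_on {0..1} d4"
    and d0: "d0 0 = 0" "d1 0 = 0" "d2 0 = 0" "d3 0 = 0" "d4 0 = 0"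
    and m: "\<And>t. t \<in> {0..1} \<Longrightarrow> (u0 + d0 t, v0 + d1 t, u1 + d2 t, v1 + d3 t, v2 + d4 t) \<in> Cfree"
  shows "path_component Cfree (u0,v0,u1,v1,v2) (u0 + d0 1, v0 + d1 1, u1 + d2 1, v1 + d3 1, v2 + d4 1)"
  unfolding path_component_def
proof (intro exI conjI)
  let ?q = "\<lambda>t. (u0 + d0 t, v0 + d1 t, u1 + d2 t, v1 + d3 t, v2 + d4 t)"
  show "path ?q" unfolding path_def by (intro continuous_intros d)
  show "path_image ?q \<subseteq> Cfree" using m by (auto simp: path_image_def)
qed (auto simp: pathstart_def pathfinish_def d0)

lemma loopU0:
  assumes c: "(u0,v0,u1,v1,v2) \<in> Cfree" and n: "norm (exp u0) < 1" "norm (exp u1 / exp u0) < 1"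
  shows "path_component Cfree (u0,v0,u1,v1,v2) (u0 + \<i> * of_real (2*pi), v0, u1, v1, v2)"
proof -
  let ?c0 = "exp u0" and ?c1 = "exp u1"
  have e: "exp v0 = 1 - ?c0" "exp v1 = 1 - ?c1" "exp v2 = 1 - ?c1 / ?c0" using c by (auto simp: Cfree_def exp_diff eq_diff_eq add.commute)
  have nE: "norm (inverse (E t)) = 1" for t by (simp add: norm_inverse)
  have cE: "continuous_on {0..1} (\<lambda>t. inverse (E t))" by (intro continuous_intros) auto
  have "path_component Cfree (u0,v0,u1,v1,v2)
     (u0 + \<i> * of_real (2*pi*1), v0 + (Ln (1 + (-?c0) * E 1) - Ln (1 + (-?c0))), u1 + 0, v1 + 0,
      v2 + (Ln (1 + (-(?c1/?c0)) * inverse (E 1)) - Ln (1 + (-(?c1/?c0)))))"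
  proof (rule loop_pc[OF c])
    show "continuous_on {0..1} (\<lambda>t. \<i> * of_real (2*pi*t))" by (intro continuous_intros)
    show "continuous_on {0..1} (\<lambda>t. Ln (1 + (-?c0) * E t) - Ln (1 + (-?c0)))"
      using n by (intro continuous_intros) auto
    show "continuous_on {0..1} (\<lambda>t. Ln (1 + (-(?c1/?c0)) * inverse (E t)) - Ln (1 + (-(?c1/?c0))))"
      using n nE by (intro continuous_intros cE) auto
    fix t :: real assume t: "t \<in> {0..1}"
    have n1: "norm (-?c0) < 1" and n2: "norm (-(?c1/?c0)) < 1" using n by auto
    have x: "exp (u0 + \<i> * of_real (2*pi*t)) = ?c0 * E t" by (simp add: E_def exp_add)
    have y: "exp (v0 + (Ln (1 + (-?c0) * E t) - Ln (1 + (-?c0)))) = 1 - ?c0 * E t"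
      unfolding expL2[of "-?c0" "E t", OF _ normE, OF n1] e(1) using n ne_1q[of "-?c0" 1] by simp
    have z: "exp (v2 + (Ln (1 + (-(?c1/?c0)) * inverse (E t)) - Ln (1 + (-(?c1/?c0))))) = 1 - ?c1 / (?c0 * E t)"
      unfolding expL2[of "-(?c1/?c0)" "inverse (E t)", OF n2 nE] e(3) using n ne_1q[of "-(?c1/?c0)" 1]
      by (simp add: field_simps)
    show "(u0 + \<i> * of_real (2*pi*t), v0 + (Ln (1 + (-?c0) * E t) - Ln (1 + (-?c0))), u1 + 0, v1 + 0,
      v2 + (Ln (1 + (-(?c1/?c0)) * inverse (E t)) - Ln (1 + (-(?c1/?c0))))) \<in> Cfree"
      unfolding Cfree_def using x y z e by (simp add: exp_diff)
  qed auto
  then show ?thesis by simp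
qed

lemma loopU1:
  assumes c: "(u0,v0,u1,v1,v2) \<in> Cfree" and n: "norm (exp u1) < 1" "norm (exp u1 / exp u0) < 1"
  shows "path_component Cfree (u0,v0,u1,v1,v2) (u0, v0, u1 + \<i> * of_real (2*pi), v1, v2)"
proof -
  let ?c0 = "exp u0" and ?c1 = "exp u1"
  have e: "exp v0 = 1 - ?c0" "exp v1 = 1 - ?c1" "exp v2 = 1 - ?c1 / ?c0" using c by (auto simp: Cfree_def exp_diff eq_diff_eq add.commute)
  have n1: "norm (-?c1) < 1" and n2: "norm (-(?c1/?c0)) < 1" using n by auto
  have "path_component Cfree (u0,v0,u1,v1,v2)
     (u0 + 0, v0 + 0, u1 + \<i> * of_real (2*pi*1), v1 + (Ln (1 + (-?c1) * E 1) - Ln (1 + (-?c1))),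
      v2 + (Ln (1 + (-(?c1/?c0)) * E 1) - Ln (1 + (-(?c1/?c0)))))"
  proof (rule loop_pc[OF c])
    show "continuous_on {0..1} (\<lambda>t. \<i> * of_real (2*pi*t))" by (intro continuous_intros)
    show "continuous_on {0..1} (\<lambda>t. Ln (1 + (-?c1) * E t) - Ln (1 + (-?c1)))"
      using n1 by (intro continuous_intros) auto
    show "continuous_on {0..1} (\<lambda>t. Ln (1 + (-(?c1/?c0)) * E t) - Ln (1 + (-(?c1/?c0))))"
      using n2 by (intro continuous_intros) auto
    fix t :: real assume t: "t \<in> {0..1}"
    have x: "exp (u1 + \<i> * of_real (2*pi*t)) = ?c1 * E t" by (simp add: E_def exp_add)
    have y: "exp (v1 + (Ln (1 + (-?c1) * E t) - Ln (1 + (-?c1)))) = 1 - ?c1 * E t"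
      unfolding expL2[OF n1 normE] e(2) using ne_1q[OF n1, of 1] by simp
    have z: "exp (v2 + (Ln (1 + (-(?c1/?c0)) * E t) - Ln (1 + (-(?c1/?c0))))) = 1 - ?c1 * E t / ?c0"
      unfolding expL2[OF n2 normE] e(3) using ne_1q[OF n2, of 1]
      by (simp add: field_simps)
    show "(u0 + 0, v0 + 0, u1 + \<i> * of_real (2*pi*t), v1 + (Ln (1 + (-?c1) * E t) - Ln (1 + (-?c1))),
      v2 + (Ln (1 + (-(?c1/?c0)) * E t) - Ln (1 + (-(?c1/?c0))))) \<in> Cfree"
      unfolding Cfree_def using x y z e by (simp add: exp_diff)
  qed auto
  then show ?thesis by simp
qed

lemma loopV1:
  assumes c: "(u0,v0,u1,v1,v2) \<in> Cfree" and n: "norm (1 - exp u1) < 1" "norm ((1 - exp u1) / (exp u0 - 1)) < 1"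
  shows "path_component Cfree (u0,v0,u1,v1,v2) (u0, v0, u1, v1 + \<i> * of_real (2*pi), v2)"
proof -
  let ?c0 = "exp u0" and ?c1 = "exp u1"
  let ?k = "(1 - ?c1) / (?c0 - 1)"
  have e: "exp v0 = 1 - ?c0" "exp v1 = 1 - ?c1" "exp v2 = 1 - ?c1 / ?c0" using c by (auto simp: Cfree_def exp_diff eq_diff_eq add.commute)
  have ne: "?c0 \<noteq> 1" "?c1 \<noteq> ?c0" "?c1 \<noteq> 1" using Cfree_ne[OF c] by auto
  have n1: "norm (-(1 - ?c1)) < 1" and n2: "norm ?k < 1" using n by (auto simp: norm_minus_commute)
  have "path_component Cfree (u0,v0,u1,v1,v2)
     (u0 + 0, v0 + 0, u1 + (Ln (1 + (-(1 - ?c1)) * E 1) - Ln (1 + (-(1 - ?c1)))), v1 + \<i> * of_real (2*pi*1),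
      v2 + (Ln (1 + ?k * E 1) - Ln (1 + ?k)))"
  proof (rule loop_pc[OF c])
    show "continuous_on {0..1} (\<lambda>t. \<i> * of_real (2*pi*t))" by (intro continuous_intros)
    show "continuous_on {0..1} (\<lambda>t. Ln (1 + (-(1 - ?c1)) * E t) - Ln (1 + (-(1 - ?c1))))"
      using n1 by (intro continuous_intros) auto
    show "continuous_on {0..1} (\<lambda>t. Ln (1 + ?k * E t) - Ln (1 + ?k))"
      using n2 by (intro continuous_intros) auto
    fix t :: real assume t: "t \<in> {0..1}"
    have x: "exp (u1 + (Ln (1 + (-(1 - ?c1)) * E t) - Ln (1 + (-(1 - ?c1))))) = 1 - (1 - ?c1) * E t"
      unfolding expL2[OF n1 normE] using ne by (simp add: field_simps)
    have y: "exp (v1 + \<i> * of_real (2*pi*t)) = (1 - ?c1) * E t" by (simp add: E_def exp_add e)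
    have z: "exp (v2 + (Ln (1 + ?k * E t) - Ln (1 + ?k))) = 1 - (1 - (1 - ?c1) * E t) / ?c0"
    proof -
      have h1: "1 + ?k = (?c0 - ?c1)/(?c0 - 1)" and h2: "1 + ?k * E t = (?c0 - 1 + (1 - ?c1) * E t)/(?c0 - 1)"
        and h4: "1 - ?c1 / ?c0 = (?c0 - ?c1) / ?c0"
        using ne by (simp_all add: field_simps)
      have h3: "?c0 - 1 \<noteq> 0" "?c0 - ?c1 \<noteq> 0" using ne by auto
      show ?thesis unfolding expL2[OF n2 normE] unfolding e(3) h1 h2 h4 cancel3[OF h3(2) h3(1)] using h3 by (simp add: field_simps)
    qed
    show "(u0 + 0, v0 + 0, u1 + (Ln (1 + (-(1 - ?c1)) * E t) - Ln (1 + (-(1 - ?c1)))), v1 + \<i> * of_real (2*pi*t),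
      v2 + (Ln (1 + ?k * E t) - Ln (1 + ?k))) \<in> Cfree"
      unfolding Cfree_def using x y z e by (simp add: exp_diff)
  qed auto
  then show ?thesis by simp
qed

lemma loopV2:
  assumes c: "(u0,v0,u1,v1,v2) \<in> Cfree" and n: "norm ((exp u1 - exp u0) / exp u0) < 1" "norm ((exp u1 - exp u0) / (1 - exp u0)) < 1"
  shows "path_component Cfree (u0,v0,u1,v1,v2) (u0, v0, u1, v1, v2 + \<i> * of_real (2*pi))"
proof -
  let ?c0 = "exp u0" and ?c1 = "exp u1"
  let ?r = "(?c1 - ?c0) / ?c0" and ?s = "(?c1 - ?c0) / (1 - ?c0)"
  have e: "exp v0 = 1 - ?c0" "exp v1 = 1 - ?c1" "exp v2 = 1 - ?c1 / ?c0" using c by (auto simp: Cfree_def exp_diff eq_diff_eq add.commute)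
  have ne: "?c0 \<noteq> 1" "?c1 \<noteq> ?c0" "?c1 \<noteq> 1" using Cfree_ne[OF c] by auto
  have n1: "norm ?r < 1" and n2: "norm (- ?s) < 1" using n by auto
  have "path_component Cfree (u0,v0,u1,v1,v2)
     (u0 + 0, v0 + 0, u1 + (Ln (1 + ?r * E 1) - Ln (1 + ?r)), v1 + (Ln (1 + (- ?s) * E 1) - Ln (1 + (- ?s))),
      v2 + \<i> * of_real (2*pi*1))"
  proof (rule loop_pc[OF c])
    show "continuous_on {0..1} (\<lambda>t. \<i> * of_real (2*pi*t))" by (intro continuous_intros)
    show "continuous_on {0..1} (\<lambda>t. Ln (1 + ?r * E t) - Ln (1 + ?r))"
      using n1 by (intro continuous_intros) auto
    show "continuous_on {0..1} (\<lambda>t. Ln (1 + (- ?s) * E t) - Ln (1 + (- ?s)))"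
      using n2 by (intro continuous_intros) auto
    fix t :: real assume t: "t \<in> {0..1}"
    have x: "exp (u1 + (Ln (1 + ?r * E t) - Ln (1 + ?r))) = ?c0 + (?c1 - ?c0) * E t"
      unfolding expL2[OF n1 normE] using ne by (simp add: field_simps)
    have y: "exp (v1 + (Ln (1 + (- ?s) * E t) - Ln (1 + (- ?s)))) = 1 - (?c0 + (?c1 - ?c0) * E t)"
    proof -
      have h1: "1 + - ?s = (1 - ?c1)/(1 - ?c0)" and h2: "1 + - ?s * E t = (1 - (?c0 + (?c1 - ?c0) * E t))/(1 - ?c0)"
        using ne by (simp_all add: field_simps)
      have h3: "1 - ?c0 \<noteq> 0" "1 - ?c1 \<noteq> 0" using ne by auto
      show ?thesis unfolding expL2[OF n2 normE] unfolding e(2) h1 h2 using h3 by simp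
    qed
    have z: "exp (v2 + \<i> * of_real (2*pi*t)) = 1 - (?c0 + (?c1 - ?c0) * E t) / ?c0"
      using ne by (simp add: E_def exp_add e field_simps)
    show "(u0 + 0, v0 + 0, u1 + (Ln (1 + ?r * E t) - Ln (1 + ?r)), v1 + (Ln (1 + (- ?s) * E t) - Ln (1 + (- ?s))),
      v2 + \<i> * of_real (2*pi*t)) \<in> Cfree"
      unfolding Cfree_def using x y z e by (simp add: exp_diff)
  qed auto
  then show ?thesis by simp
qed

lemma loopV0:
  assumes c: "(u0,v0,u1,v1,v2) \<in> Cfree" and n: "norm (1 - exp u0) < 1" "norm ((1 - exp u1) / (1 - exp u0)) < 1"
  shows "path_component Cfree (u0,v0,u1,v1,v2) (u0, v0 + \<i> * of_real (2*pi), u1, v1, v2 + \<i> * of_real (2*pi))"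
proof -
  let ?c0 = "exp u0" and ?c1 = "exp u1"
  let ?l = "(1 - ?c1) / (1 - ?c0)"
  let ?L = "\<lambda>t. Ln (1 + (-(1 - ?c0)) * E t) - Ln (1 + (-(1 - ?c0)))"
  let ?M = "\<lambda>t. Ln (1 + (- ?l) * inverse (E t)) - Ln (1 + (- ?l))"
  have e: "exp v0 = 1 - ?c0" "exp v1 = 1 - ?c1" "exp v2 = 1 - ?c1 / ?c0" using c by (auto simp: Cfree_def exp_diff eq_diff_eq add.commute)
  have ne: "?c0 \<noteq> 1" "?c1 \<noteq> ?c0" "?c1 \<noteq> 1" using Cfree_ne[OF c] by auto
  have nE: "norm (inverse (E t)) = 1" for t by (simp add: norm_inverse)
  have cE: "continuous_on {0..1} (\<lambda>t. inverse (E t))" by (intro continuous_intros) auto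
  have n1: "norm (-(1 - ?c0)) < 1" using n(1) by (simp only: norm_minus_cancel)
  have n2: "norm (- ?l) < 1" using n(2) by (simp only: norm_minus_cancel)
  have "path_component Cfree (u0,v0,u1,v1,v2)
     (u0 + ?L 1, v0 + \<i> * of_real (2*pi*1), u1 + 0, v1 + 0,
      v2 + (\<i> * of_real (2*pi*1) + ?M 1 - ?L 1))"
  proof (rule loop_pc[OF c])
    show "continuous_on {0..1} (\<lambda>t. \<i> * of_real (2*pi*t))" by (intro continuous_intros)
    have cL: "continuous_on {0..1} ?L"
      by (rule continuous_on_diff[OF cont_Ln1q[OF n1 contE normE] continuous_on_const])
    have cM: "continuous_on {0..1} ?M"
      by (rule continuous_on_diff[OF cont_Ln1q[OF n2 cE nE] continuous_on_const])
    show "continuous_on {0..1} ?L" by (rule cL)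
    show "continuous_on {0..1} (\<lambda>t. \<i> * of_real (2*pi*t) + ?M t - ?L t)"
    proof (rule continuous_on_diff[OF continuous_on_add cL])
      show "continuous_on {0..1} (\<lambda>t. \<i> * of_real (2*pi*t))" by (intro continuous_intros)
    qed (rule cM)
    fix t :: real assume t: "t \<in> {0..1}"
    have xL: "exp (?L t) = (1 - (1 - ?c0) * E t) / ?c0"
      using expL[OF n1 normE, of t] by (simp add: algebra_simps)
    have xM: "exp (?M t) = (1 + (- ?l) * inverse (E t)) / (1 + (- ?l))"
      using expL[OF n2 nE, of t] by simp
    have X0: "1 - (1 - ?c0) * E t \<noteq> 0" using ne_1q[OF n1 normE, of t] by (simp add: algebra_simps)
    have x: "exp (u0 + ?L t) = 1 - (1 - ?c0) * E t"
      unfolding exp_add xL by simp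
    have y: "exp (v0 + \<i> * of_real (2*pi*t)) = (1 - ?c0) * E t" by (simp add: E_def exp_add e)
    have z: "exp (v2 + (\<i> * of_real (2*pi*t) + ?M t - ?L t)) = 1 - ?c1 / (1 - (1 - ?c0) * E t)"
    proof -
      have a: "exp (v2 + (\<i> * of_real (2*pi*t) + ?M t - ?L t)) = exp v2 * E t * exp (?M t) / exp (?L t)"
        by (simp add: exp_add exp_diff E_def)
      have h1: "1 + - ?l = (?c1 - ?c0)/(1 - ?c0)" using ne by (simp add: divide_simps)
      have h2: "1 + - ?l * inverse (E t) = (?c1 - (1 - (1 - ?c0) * E t))/((1 - ?c0) * E t)"
        using ne by (intro alg_h2) auto
      have h4: "1 - ?c1 / ?c0 = (-(?c1 - ?c0)) / ?c0" by (simp add: divide_simps)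
      show ?thesis unfolding a xM xL unfolding e(3) h1 h2 h4
        by (rule alg5) (use ne X0 in auto)
    qed
    show "(u0 + ?L t, v0 + \<i> * of_real (2*pi*t), u1 + 0, v1 + 0,
      v2 + (\<i> * of_real (2*pi*t) + ?M t - ?L t)) \<in> Cfree"
      unfolding Cfree_def using x y z e by (simp add: exp_diff)
  qed auto
  then show ?thesis by simp
qed

definition "cc0 = Complex (1/2) (1/2)"
definition "cc1 = (1/2 :: complex)"
lemma cc_facts:
  "norm cc0 < 1" "norm (cc1/cc0) < 1" "norm cc1 < 1" "norm (1 - cc1) < 1"
   "norm ((1 - cc1)/(cc0 - 1)) < 1" "norm (1 - cc0) < 1" "norm ((1 - cc1)/(1 - cc0)) < 1"
   "norm ((cc1 - cc0)/cc0) < 1" "norm ((cc1 - cc0)/(1 - cc0)) < 1"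
   "cc0 \<noteq> 0" "cc0 \<noteq> 1" "cc1 \<noteq> 0" "cc1 \<noteq> 1" "cc1 \<noteq> cc0"
proof -
  have q: "sqrt (1/4::real) = 1/2" by (rule real_sqrt_unique) (auto simp: power2_eq_square)
  have a: "norm cc0 = sqrt (1/2)" "norm (1 - cc0) = sqrt (1/2)" "norm (cc0 - 1) = sqrt (1/2)"
    "norm cc1 = 1/2" "norm (1 - cc1) = 1/2" "norm (cc1 - cc0) = 1/2"
    by (simp_all add: cc0_def cc1_def cmod_def power2_eq_square q)
  have "sqrt (1/4) < sqrt (1/2::real)" by (simp only: real_sqrt_less_iff)
  then have s: "1/2 < sqrt (1/2::real)" "sqrt (1/2::real) < 1"
    by (simp_all add: q real_sqrt_less_iff)
  have ne: "cc0 \<noteq> 0" "cc0 \<noteq> 1" "cc1 \<noteq> 0" "cc1 \<noteq> 1" "cc1 \<noteq> cc0"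
    by (simp_all add: cc0_def cc1_def complex_eq_iff)
  then show "cc0 \<noteq> 0" "cc0 \<noteq> 1" "cc1 \<noteq> 0" "cc1 \<noteq> 1" "cc1 \<noteq> cc0" by auto
  show "norm cc0 < 1" "norm (cc1/cc0) < 1" "norm cc1 < 1" "norm (1 - cc1) < 1"
   "norm ((1 - cc1)/(cc0 - 1)) < 1" "norm (1 - cc0) < 1" "norm ((1 - cc1)/(1 - cc0)) < 1"
   "norm ((cc1 - cc0)/cc0) < 1" "norm ((cc1 - cc0)/(1 - cc0)) < 1"
    using s ne by (simp_all add: norm_divide a divide_simps)
qed

definition tp :: "int \<Rightarrow> complex" where "tp n = \<i> * of_real (2*pi) * of_int n"

lemma exp_tp [simp]: "exp (tp n) = 1"
proof -
  have "exp (tp n) = exp 0" unfolding exp_eq tp_def by (intro exI[of _ n]) (simp add: algebra_simps)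
  then show ?thesis by simp
qed

lemma tp_add: "tp a + tp b = tp (a + b)" by (simp add: tp_def algebra_simps)
lemma tp0 [simp]: "tp 0 = 0" by (simp add: tp_def)
lemma tp1: "tp 1 = \<i> * of_real (2*pi)" by (simp add: tp_def)

definition shiftv :: "int \<Rightarrow> int \<Rightarrow> int \<Rightarrow> int \<Rightarrow> int \<Rightarrow> complex \<times> complex \<times> complex \<times> complex \<times> complex
   \<Rightarrow> complex \<times> complex \<times> complex \<times> complex \<times> complex" where
  "shiftv a b c d m x = (case x of (u0,v0,u1,v1,v2) \<Rightarrow> (u0 + tp a, v0 + tp b, u1 + tp c, v1 + tp d, v2 + tp m))"

lemma shiftv_add: "shiftv a b c d m (shiftv a' b' c' d' m' x) = shiftv (a'+a) (b'+b) (c'+c) (d'+d) (m'+m) x"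
  by (cases x) (simp add: shiftv_def tp_add[symmetric] algebra_simps)

lemma shiftv0: "shiftv 0 0 0 0 0 x = x" by (cases x) (simp add: shiftv_def)

definition Fib :: "(complex \<times> complex \<times> complex \<times> complex \<times> complex) set" where
  "Fib = {x \<in> Cfree. exp (fst x) = cc0 \<and> exp (fst (snd (snd x))) = cc1}"

lemma shiftv_Fib: "x \<in> Fib \<Longrightarrow> shiftv a b c d m x \<in> Fib"
  by (cases x) (auto simp: Fib_def Cfree_def shiftv_def exp_add exp_diff)

lemma iter:
  assumes g: "\<And>x. x \<in> Fib \<Longrightarrow> path_component Cfree x (shiftv a b c d m x)" and x: "x \<in> Fib"
  shows "path_component Cfree x (shiftv (n*a) (n*b) (n*c) (n*d) (n*m) x)"
proof (induct n rule: int_induct[where k=0])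
  case base
  then show ?case using x by (simp add: shiftv0 path_component_refl Fib_def)
next
  case (step1 i)
  have "path_component Cfree (shiftv (i*a) (i*b) (i*c) (i*d) (i*m) x)
          (shiftv a b c d m (shiftv (i*a) (i*b) (i*c) (i*d) (i*m) x))"
    by (rule g[OF shiftv_Fib[OF x]])
  then show ?case using step1(2) path_component_trans by (fastforce simp: shiftv_add algebra_simps)
next
  case (step2 i)
  have "path_component Cfree (shiftv ((i-1)*a) ((i-1)*b) ((i-1)*c) ((i-1)*d) ((i-1)*m) x)
          (shiftv a b c d m (shiftv ((i-1)*a) ((i-1)*b) ((i-1)*c) ((i-1)*d) ((i-1)*m) x))"
    by (rule g[OF shiftv_Fib[OF x]])
  then have "path_component Cfree (shiftv ((i-1)*a) ((i-1)*b) ((i-1)*c) ((i-1)*d) ((i-1)*m) x)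
          (shiftv (i*a) (i*b) (i*c) (i*d) (i*m) x)"
    by (simp add: shiftv_add algebra_simps)
  then show ?case using step2(2) path_component_trans path_component_sym by blast
qed

lemma gens:
  assumes x: "x \<in> Fib"
  shows "path_component Cfree x (shiftv 1 0 0 0 0 x)" "path_component Cfree x (shiftv 0 0 1 0 0 x)"
    "path_component Cfree x (shiftv 0 0 0 1 0 x)" "path_component Cfree x (shiftv 0 1 0 0 1 x)"
    "path_component Cfree x (shiftv 0 0 0 0 1 x)"
proof -
  obtain u0 v0 u1 v1 v2 where xd: "x = (u0,v0,u1,v1,v2)" by (cases x) auto
  have c: "(u0,v0,u1,v1,v2) \<in> Cfree" and e: "exp u0 = cc0" "exp u1 = cc1" using x xd by (auto simp: Fib_def)
  note f = cc_facts[folded e]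
  show "path_component Cfree x (shiftv 1 0 0 0 0 x)"
    using loopU0[OF c f(1) f(2)] by (simp add: xd shiftv_def tp1)
  show "path_component Cfree x (shiftv 0 0 1 0 0 x)"
    using loopU1[OF c f(3) f(2)] by (simp add: xd shiftv_def tp1)
  show "path_component Cfree x (shiftv 0 0 0 1 0 x)"
    using loopV1[OF c f(4) f(5)] by (simp add: xd shiftv_def tp1)
  show "path_component Cfree x (shiftv 0 1 0 0 1 x)"
    using loopV0[OF c f(6) f(7)] by (simp add: xd shiftv_def tp1)
  show "path_component Cfree x (shiftv 0 0 0 0 1 x)"
    using loopV2[OF c f(8) f(9)] by (simp add: xd shiftv_def tp1)
qed

lemma exp_eq_tp: "exp w = exp z \<Longrightarrow> \<exists>n. w = z + tp n"
  unfolding exp_eq tp_def by (auto simp: algebra_simps)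

lemma fiber_conn:
  assumes x: "x \<in> Fib" and y: "y \<in> Fib"
  shows "path_component Cfree x y"
proof -
  obtain u0 v0 u1 v1 v2 where xd: "x = (u0,v0,u1,v1,v2)" by (cases x) auto
  obtain u0' v0' u1' v1' v2' where yd: "y = (u0',v0',u1',v1',v2')" by (cases y) auto
  have ex: "exp u0 + exp v0 = 1" "exp u1 + exp v1 = 1" "exp v2 = 1 - exp (u1 - u0)" "exp u0 = cc0" "exp u1 = cc1"
    using x xd by (auto simp: Fib_def Cfree_def)
  have ey: "exp u0' + exp v0' = 1" "exp u1' + exp v1' = 1" "exp v2' = 1 - exp (u1' - u0')" "exp u0' = cc0" "exp u1' = cc1"
    using y yd by (auto simp: Fib_def Cfree_def)
  obtain a where a: "u0' = u0 + tp a" using exp_eq_tp[of u0' u0] ex ey by auto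
  obtain b where b: "v0' = v0 + tp b" using exp_eq_tp[of v0' v0] ex ey by (metis add_diff_cancel_left')
  obtain c where c: "u1' = u1 + tp c" using exp_eq_tp[of u1' u1] ex ey by auto
  obtain d where d: "v1' = v1 + tp d" using exp_eq_tp[of v1' v1] ex ey by (metis add_diff_cancel_left')
  have "exp v2' = exp v2" using ex ey by (simp add: exp_diff)
  then obtain m where m: "v2' = v2 + tp m" using exp_eq_tp[of v2' v2] by blast
  have tpm: "tp m = tp (m - b) + tp b" by (simp add: tp_add)
  have yy: "y = shiftv (1*a) 0 0 0 0 (shiftv 0 0 (1*c) 0 0 (shiftv 0 0 0 (1*d) 0
       (shiftv 0 (b*1) 0 0 (b*1) (shiftv 0 0 0 0 ((m-b)*1) x))))"
    using tpm by (simp add: shiftv_add yd xd a b c d m shiftv_def)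
  have F: "shiftv 0 0 0 0 ((m-b)*1) x \<in> Fib" "shiftv 0 (b*1) 0 0 (b*1) (shiftv 0 0 0 0 ((m-b)*1) x) \<in> Fib"
    "shiftv 0 0 0 (1*d) 0 (shiftv 0 (b*1) 0 0 (b*1) (shiftv 0 0 0 0 ((m-b)*1) x)) \<in> Fib"
    "shiftv 0 0 (1*c) 0 0 (shiftv 0 0 0 (1*d) 0 (shiftv 0 (b*1) 0 0 (b*1) (shiftv 0 0 0 0 ((m-b)*1) x))) \<in> Fib"
    using x by (auto intro!: shiftv_Fib)
  have p1: "path_component Cfree x (shiftv 0 0 0 0 ((m-b)*1) x)"
    using iter[OF gens(5) x, of "m-b"] by simp
  have p2: "path_component Cfree (shiftv 0 0 0 0 ((m-b)*1) x) (shiftv 0 (b*1) 0 0 (b*1) (shiftv 0 0 0 0 ((m-b)*1) x))"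
    using iter[OF gens(4) F(1), of b] by simp
  have p3: "path_component Cfree (shiftv 0 (b*1) 0 0 (b*1) (shiftv 0 0 0 0 ((m-b)*1) x)) (shiftv 0 0 0 (1*d) 0 (shiftv 0 (b*1) 0 0 (b*1) (shiftv 0 0 0 0 ((m-b)*1) x)))"
    using iter[OF gens(3) F(2), of d] by simp
  have p4: "path_component Cfree (shiftv 0 0 0 (1*d) 0 (shiftv 0 (b*1) 0 0 (b*1) (shiftv 0 0 0 0 ((m-b)*1) x))) (shiftv 0 0 (1*c) 0 0 (shiftv 0 0 0 (1*d) 0 (shiftv 0 (b*1) 0 0 (b*1) (shiftv 0 0 0 0 ((m-b)*1) x))))"
    using iter[OF gens(2) F(3), of c] by simp
  have p5: "path_component Cfree (shiftv 0 0 (1*c) 0 0 (shiftv 0 0 0 (1*d) 0 (shiftv 0 (b*1) 0 0 (b*1) (shiftv 0 0 0 0 ((m-b)*1) x)))) y"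
    unfolding yy using iter[OF gens(1) F(4), of a] by simp
  show ?thesis
    by (rule path_component_trans[OF path_component_trans[OF path_component_trans[OF path_component_trans[OF p1 p2] p3] p4] p5])
qed

lemma Cfree_conn:
  assumes "x \<in> Cfree" "y \<in> Cfree" shows "path_component Cfree x y"
proof -
  note f = cc_facts
  obtain x' where x': "path_component Cfree x x'" "exp (fst x') = cc0" "exp (fst (snd (snd x'))) = cc1"
    using to_fiber[OF assms(1) f(10) f(11) f(12) f(13) f(14)] by blast
  obtain y' where y': "path_component Cfree y y'" "exp (fst y') = cc0" "exp (fst (snd (snd y'))) = cc1"
    using to_fiber[OF assms(2) f(10) f(11) f(12) f(13) f(14)] by blast
  have "x' \<in> Fib" "y' \<in> Fib" using x' y' path_component_mem(2) by (auto simp: Fib_def)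
  then have "path_component Cfree x' y'" by (rule fiber_conn)
  then show ?thesis using x'(1) y'(1) path_component_trans path_component_sym by blast
qed

definition mk :: "complex \<times> complex \<times> complex \<times> complex \<times> complex \<Rightarrow> hpt \<times> hpt \<times> hpt \<times> hpt \<times> hpt" where
  "mk c = ((fst c, fst (snd c)), (fst (snd (snd c)), fst (snd (snd (snd c)))),
     (fst (snd (snd c)) - fst c, snd (snd (snd (snd c)))),
     (fst (snd (snd c)) - fst c + fst (snd c) - fst (snd (snd (snd c))), snd (snd (snd (snd c))) - fst (snd (snd (snd c)))),
     (fst (snd c) - fst (snd (snd (snd c))), snd (snd (snd (snd c))) - fst (snd (snd (snd c))) + fst c))"

lemma mk_simp: "mk (u0,v0,u1,v1,v2) = ((u0,v0),(u1,v1),(u1-u0,v2),(u1-u0+v0-v1, v2-v1),(v0-v1, v2-v1+u0))"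
  by (simp add: mk_def)

lemma cont_mk: "continuous_on S mk"
  unfolding mk_def by (intro continuous_intros)

lemma mk_FTpre:
  assumes c: "c \<in> Cfree" shows "mk c \<in> FTpre"
proof -
  obtain u0 v0 u1 v1 v2 where cd: "c = (u0,v0,u1,v1,v2)" by (cases c) auto
  have c': "(u0,v0,u1,v1,v2) \<in> Cfree" using c cd by simp
  let ?x0 = "exp u0" and ?x1 = "exp u1"
  have e: "exp v0 = 1 - ?x0" "exp v1 = 1 - ?x1" "exp v2 = 1 - ?x1 / ?x0" using c' by (auto simp: Cfree_def exp_diff eq_diff_eq add.commute)
  have ne: "?x0 \<noteq> 1" "?x1 \<noteq> 1" "?x1 \<noteq> ?x0" using Cfree_ne[OF c'] by auto
  have ne': "1 - ?x0 \<noteq> 0" "1 - ?x1 \<noteq> 0" using ne by auto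
  have x3: "exp (u1 - u0 + v0 - v1) = ?x1 * (1 - ?x0) / (?x0 * (1 - ?x1))" by (simp add: exp_add exp_diff e)
  have y3: "exp (v2 - v1) = (1 - ?x1 / ?x0) / (1 - ?x1)" by (simp add: exp_diff e)
  have x4: "exp (v0 - v1) = (1 - ?x0) / (1 - ?x1)" by (simp add: exp_diff e)
  have y4: "exp (v2 - v1 + u0) = (1 - ?x1 / ?x0) / (1 - ?x1) * ?x0" by (simp add: exp_add exp_diff e)
  have C: "(u0,v0) \<in> Chat" "(u1,v1) \<in> Chat" "(u1-u0,v2) \<in> Chat" "(u1-u0+v0-v1, v2-v1) \<in> Chat" "(v0-v1, v2-v1+u0) \<in> Chat"
  proof -
    have x2: "exp (u1 - u0) = ?x1 / ?x0" by (simp add: exp_diff)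
    show "(u0,v0) \<in> Chat" "(u1,v1) \<in> Chat" "(u1-u0,v2) \<in> Chat" unfolding Chat_def using c'
      by (auto simp: Cfree_def)
    have "?x1 * (1 - ?x0) / (?x0 * (1 - ?x1)) + (1 - ?x1 / ?x0) / (1 - ?x1) = 1"
    proof -
      have q: "(1 - ?x1 / ?x0) / (1 - ?x1) = (?x0 - ?x1) / (?x0 * (1 - ?x1))" by (simp add: field_simps)
      have r: "?x1 * (1 - ?x0) + (?x0 - ?x1) = ?x0 * (1 - ?x1)" by (simp add: algebra_simps)
      show ?thesis unfolding q add_divide_distrib[symmetric] r using ne' by simp
    qed
    then show "(u1-u0+v0-v1, v2-v1) \<in> Chat" by (simp add: Chat_def x3 y3)
    have "(1 - ?x0) / (1 - ?x1) + (1 - ?x1 / ?x0) / (1 - ?x1) * ?x0 = 1"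
    proof -
      have q: "(1 - ?x1 / ?x0) / (1 - ?x1) * ?x0 = (?x0 - ?x1) / (1 - ?x1)" using ne' by (simp add: field_simps)
      have r: "(1 - ?x0) + (?x0 - ?x1) = 1 - ?x1" by (simp add: algebra_simps)
      show ?thesis unfolding q add_divide_distrib[symmetric] r using ne' by simp
    qed
    then show "(v0-v1, v2-v1+u0) \<in> Chat" by (simp add: Chat_def x4 y4)
  qed
  have "(?x0, ?x1, ?x1 / ?x0, ?x1 * (1 - ?x0) / (?x0 * (1 - ?x1)), (1 - ?x0) / (1 - ?x1)) \<in> FT"
    unfolding FT_def
  proof (intro CollectI exI conjI)
    show "(?x0, ?x1, ?x1 / ?x0, ?x1 * (1 - ?x0) / (?x0 * (1 - ?x1)), (1 - ?x0) / (1 - ?x1)) =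
      (?x0, ?x1, ?x1 / ?x0, (1 - 1 / ?x0) / (1 - 1 / ?x1), (1 - ?x0) / (1 - ?x1))"
      using ne ne' by (simp add: field_simps)
  qed (use ne in auto)
  then show ?thesis using C unfolding FTpre_def cd mk_simp hatpi_def
    by (simp add: x3 x4 exp_diff[of u1 u0])
qed

lemma Im_Ln_neg: "Im z < 0 \<Longrightarrow> -pi < Im (Ln z) \<and> Im (Ln z) < 0"
proof -
  assume a: "Im z < 0"
  then have z: "z \<noteq> 0" by auto
  have "\<not> (0 \<le> Im (Ln z) \<and> Im (Ln z) \<le> pi)" using Im_Ln_pos_le[OF z] a by simp
  then show ?thesis using Im_Ln_le_pi[OF z] mpi_less_Im_Ln[OF z] by auto
qed

lemma Im_pos_ne: "0 < Im z \<Longrightarrow> z \<noteq> 0 \<and> 1 - z \<noteq> 0"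
  by (metis Im_complex_of_real less_irrefl right_minus_eq of_real_1 zero_complex.sel(2))

lemma base_identities:
  fixes a b :: complex
  assumes ia: "0 < Im a" and ib: "0 < Im b" and i2: "0 < Im (b/a)"
    and i3: "0 < Im ((1 - 1/a)/(1 - 1/b))" and i4: "0 < Im ((1 - a)/(1 - b))"
  shows "Ln (b/a) = Ln b - Ln a"
    and "Ln ((1 - 1/a)/(1 - 1/b)) = Ln b - Ln a + Ln (1 - a) - Ln (1 - b)"
    and "Ln (1 - (1 - 1/a)/(1 - 1/b)) = Ln (1 - b/a) - Ln (1 - b)"
    and "Ln ((1 - a)/(1 - b)) = Ln (1 - a) - Ln (1 - b)"
    and "Ln (1 - (1 - a)/(1 - b)) = Ln (1 - b/a) - Ln (1 - b) + Ln a"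
proof -
  have nz: "a \<noteq> 0" "b \<noteq> 0" "1 - a \<noteq> 0" "1 - b \<noteq> 0" "b - 1 \<noteq> 0" "a - 1 \<noteq> 0" using ia ib by auto
  have La: "0 < Im (Ln a)" "Im (Ln a) < pi" using Im_Ln_pos_lt_imp[OF ia] by auto
  have Lb: "0 < Im (Ln b)" "Im (Ln b) < pi" using Im_Ln_pos_lt_imp[OF ib] by auto
  have L1a: "-pi < Im (Ln (1 - a))" "Im (Ln (1 - a)) < 0" using Im_Ln_neg[of "1 - a"] ia by auto
  have L1b: "-pi < Im (Ln (1 - b))" "Im (Ln (1 - b)) < 0" using Im_Ln_neg[of "1 - b"] ib by auto
  have L2: "0 < Im (Ln (b/a))" "Im (Ln (b/a)) < pi" using Im_Ln_pos_lt_imp[OF i2] by auto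
  have L12: "-pi < Im (Ln (1 - b/a))" "Im (Ln (1 - b/a)) < 0" using Im_Ln_neg[of "1 - b/a"] i2 by auto
  have L3: "0 < Im (Ln ((1 - 1/a)/(1 - 1/b)))" "Im (Ln ((1 - 1/a)/(1 - 1/b))) < pi" using Im_Ln_pos_lt_imp[OF i3] by auto
  have L13: "-pi < Im (Ln (1 - (1 - 1/a)/(1 - 1/b)))" "Im (Ln (1 - (1 - 1/a)/(1 - 1/b))) < 0"
    using Im_Ln_neg[of "1 - (1 - 1/a)/(1 - 1/b)"] i3 by auto
  have L4: "0 < Im (Ln ((1 - a)/(1 - b)))" "Im (Ln ((1 - a)/(1 - b))) < pi" using Im_Ln_pos_lt_imp[OF i4] by auto
  have L14: "-pi < Im (Ln (1 - (1 - a)/(1 - b)))" "Im (Ln (1 - (1 - a)/(1 - b))) < 0"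
    using Im_Ln_neg[of "1 - (1 - a)/(1 - b)"] i4 by auto
  have ne2: "b/a \<noteq> 0" "1 - b/a \<noteq> 0" using Im_pos_ne[OF i2] by auto
  have ne3: "(1 - 1/a)/(1 - 1/b) \<noteq> 0" "1 - (1 - 1/a)/(1 - 1/b) \<noteq> 0" using Im_pos_ne[OF i3] by auto
  have ne4: "(1 - a)/(1 - b) \<noteq> 0" "1 - (1 - a)/(1 - b) \<noteq> 0" using Im_pos_ne[OF i4] by auto
  show 1: "Ln (b/a) = Ln b - Ln a"
    by (rule exp_complex_eqI) (use La Lb L2 nz in \<open>auto simp: exp_diff\<close>)
  show 4: "Ln ((1 - a)/(1 - b)) = Ln (1 - a) - Ln (1 - b)"
    by (rule exp_complex_eqI) (use L1a L1b L4 nz in \<open>auto simp: exp_diff\<close>)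
  have e3: "(1 - 1/a)/(1 - 1/b) = (b/a) * ((1 - a)/(1 - b))" using nz by (simp add: field_simps)
  show "Ln ((1 - 1/a)/(1 - 1/b)) = Ln b - Ln a + Ln (1 - a) - Ln (1 - b)"
  proof -
    have "Ln ((1 - 1/a)/(1 - 1/b)) = Ln (b/a) + Ln ((1 - a)/(1 - b))"
    proof (rule exp_complex_eqI)
      show "\<bar>Im (Ln ((1 - 1 / a) / (1 - 1 / b))) - Im (Ln (b / a) + Ln ((1 - a) / (1 - b)))\<bar> < 2 * pi"
        using L2 L4 L3 by auto
      show "exp (Ln ((1 - 1 / a) / (1 - 1 / b))) = exp (Ln (b / a) + Ln ((1 - a) / (1 - b)))"
        using ne2 ne3 ne4 by (simp add: exp_add e3)
    qed
    then show ?thesis unfolding 1 4 by simp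
  qed
  have e5: "1 - (1 - 1/a)/(1 - 1/b) = (1 - b/a) / (1 - b)" using nz by (simp add: field_simps)
  show 3: "Ln (1 - (1 - 1/a)/(1 - 1/b)) = Ln (1 - b/a) - Ln (1 - b)"
    by (rule exp_complex_eqI) (use L12 L1b L13 ne2 nz in \<open>auto simp: exp_diff e5\<close>)
  have e6: "1 - (1 - a)/(1 - b) = (1 - (1 - 1/a)/(1 - 1/b)) * a" using nz by (simp add: field_simps)
  show "Ln (1 - (1 - a)/(1 - b)) = Ln (1 - b/a) - Ln (1 - b) + Ln a"
  proof -
    have "Ln (1 - (1 - a)/(1 - b)) = Ln (1 - (1 - 1/a)/(1 - 1/b)) + Ln a"
    proof (rule exp_complex_eqI)
      show "\<bar>Im (Ln (1 - (1 - a)/(1 - b))) - Im (Ln (1 - (1 - 1/a)/(1 - 1/b)) + Ln a)\<bar> < 2 * pi"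
        using L13 La L14 by auto
      show "exp (Ln (1 - (1 - a)/(1 - b))) = exp (Ln (1 - (1 - 1/a)/(1 - 1/b)) + Ln a)"
        using ne3 ne4 nz by (simp add: exp_add e6)
    qed
    then show ?thesis unfolding 3 by simp
  qed
qed

definition "aB = (\<i> :: complex)"
definition "bB = Complex (-1) 3"

lemma base_Im: "0 < Im aB" "0 < Im bB" "0 < Im (bB/aB)" "0 < Im ((1 - 1/aB)/(1 - 1/bB))" "0 < Im ((1 - aB)/(1 - bB))"
  by (simp_all add: aB_def bB_def Im_divide Re_divide power2_eq_square)

lemma hatpt_F: "Im z \<noteq> 0 \<Longrightarrow> hatpt (z,False) 0 0 = (Ln z, Ln (1 - z))"
  by (simp add: hatpt_def LogB_def Log1mB_def)

lemma FThat_mk: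
  assumes c: "c \<in> Cfree" shows "mk c \<in> FThat"
proof -
  define zB where "zB = (aB, bB, bB/aB, (1 - 1/aB)/(1 - 1/bB), (1 - aB)/(1 - bB))"
  define cB where "cB = (Ln aB, Ln (1 - aB), Ln bB, Ln (1 - bB), Ln (1 - bB/aB))"
  note I = base_Im
  have ne: "aB \<noteq> 0" "1 - aB \<noteq> 0" "bB \<noteq> 0" "1 - bB \<noteq> 0" "1 - bB/aB \<noteq> 0" "aB \<noteq> 1" "bB \<noteq> 1" "aB \<noteq> bB"
    using Im_pos_ne[OF I(1)] Im_pos_ne[OF I(2)] Im_pos_ne[OF I(3)] by (auto simp: aB_def bB_def complex_eq_iff)
  have zF: "zB \<in> FTplus"
    unfolding FTplus_def FT_def zB_def using I ne by auto
  have cBC: "cB \<in> Cfree" unfolding cB_def Cfree_def using ne by (simp add: exp_diff)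
  have lm: "lift0 zB = mk cB"
    unfolding lift0_def zB_def cB_def mk_simp using I
    by (simp add: hatpt_F base_identities[OF I] less_imp_neq[symmetric] less_imp_neq)
  have "path_component Cfree cB c" by (rule Cfree_conn[OF cBC c])
  then obtain g where g: "path g" "path_image g \<subseteq> Cfree" "pathstart g = cB" "pathfinish g = c"
    unfolding path_component_def by blast
  have "path_component FTpre (mk cB) (mk c)"
    unfolding path_component_def
  proof (intro exI conjI)
    show "path (mk \<circ> g)" using g(1) unfolding path_def by (intro continuous_on_compose cont_mk)
    have "mk (g t) \<in> FTpre" if "t \<in> {0..1}" for t
      using g(2) that mk_FTpre unfolding path_image_def by blast
    then show "path_image (mk \<circ> g) \<subseteq> FTpre" unfolding path_image_def by auto
  qed (use g in \<open>auto simp: pathstart_def pathfinish_def\<close>)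
  then have "connected_component FTpre (lift0 zB) (mk c)"
    using path_component_subset_connected_component[of FTpre "mk cB"] lm by auto
  then show ?thesis unfolding FThat_def using zF by blast
qed

lemma exp_m2pi: "exp (x - 2 * complex_of_real pi * \<i>) = exp x"
  by (simp add: exp_diff)

lemma Cbar_props:
  assumes "z \<in> Cbar"
  shows "fst z \<noteq> 0" "fst z \<noteq> 1" "exp (LogB z) = fst z" "exp (Log1mB z) = 1 - fst z"
    "-pi \<le> ArgB z" "ArgB z \<le> pi"
proof -
  have nz: "fst z \<noteq> 0 \<and> fst z \<noteq> 1"
    using assms unfolding Cbar_def Ccut_def
    by (auto simp: image_iff)
  then show "fst z \<noteq> 0" "fst z \<noteq> 1" by auto
  have n1: "1 - fst z \<noteq> 0" using nz by auto
  show "exp (LogB z) = fst z" using nz by (simp add: LogB_def exp_m2pi)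
  show "exp (Log1mB z) = 1 - fst z" using n1 by (simp add: Log1mB_def exp_m2pi)
  have b: "-pi < Im (Ln (fst z))" "Im (Ln (fst z)) \<le> pi" using nz mpi_less_Im_Ln Im_Ln_le_pi by auto
  have "-pi \<le> ArgB z \<and> ArgB z \<le> pi"
  proof (cases "snd z \<and> Im (fst z) = 0 \<and> Re (fst z) < 0")
    case True
    then have "Im (Ln (fst z)) = pi" using nz Im_Ln_eq_pi by auto
    then show ?thesis using True by (auto simp: ArgB_def LogB_def)
  next
    case False
    then show ?thesis using b by (auto simp: ArgB_def LogB_def)
  qed
  then show "-pi \<le> ArgB z" "ArgB z \<le> pi" by auto
qed

lemma tp_hat: "2 * complex_of_real pi * \<i> * of_int p = tp p"
  by (simp add: tp_def algebra_simps)

lemma key: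
  assumes z: "z \<in> Cbar" and w: "w \<in> Cbar" and zw: "fst z * fst w \<noteq> 1"
    and k: "LogB (plus0i (fst z * fst w)) + tp k = LogB z + tp p + (LogB w + tp r)"
  shows "Phat_eq (padd (curly z p) (curly w r)) (curly (plus0i (fst z * fst w)) k)"
proof -
  let ?m = "plus0i (fst z * fst w)"
  note Z = Cbar_props[OF z] and W = Cbar_props[OF w]
  have m1: "exp (Log1mB ?m) = 1 - fst z * fst w" using zw by (simp add: plus0i_def Log1mB_def exp_m2pi)
  have m0: "exp (LogB ?m) = fst z * fst w" using Z W by (simp add: plus0i_def LogB_def)
  define c where "c = (LogB z + tp p, Log1mB z, LogB ?m + tp k, Log1mB ?m, Log1mB w)"
  define c' where "c' = (LogB z + tp p, Log1mB z - tp 1, LogB ?m + tp k, Log1mB ?m - tp 1, Log1mB w - tp 1)"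
  have d: "LogB ?m + tp k - (LogB z + tp p) = LogB w + tp r" using k by (simp add: algebra_simps)
  have cC: "c \<in> Cfree" "c' \<in> Cfree" unfolding c_def c'_def Cfree_def
    using Z W m0 m1 by (simp_all add: exp_add exp_diff d)
  have mc: "mk c = (hatpt z p 0, hatpt ?m k 0, hatpt w r 0,
      (LogB w + tp r + Log1mB z - Log1mB ?m, Log1mB w - Log1mB ?m),
      (Log1mB z - Log1mB ?m, Log1mB w - Log1mB ?m + (LogB z + tp p)))"
    unfolding c_def mk_simp hatpt_def d by (simp add: algebra_simps tp_def)
  have mc': "mk c' = (hatpt z p 1, hatpt ?m k 1, hatpt w r 1,
      (LogB w + tp r + Log1mB z - Log1mB ?m, Log1mB w - Log1mB ?m),
      (Log1mB z - Log1mB ?m, Log1mB w - Log1mB ?m + (LogB z + tp p)))"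
    unfolding c'_def mk_simp hatpt_def d by (simp add: algebra_simps tp_def)
  have "(\<lambda>x. (0 + fiveterm (mk c') x) - fiveterm (mk c) x) \<in> FTrels"
    by (intro FTrels.sub FTrels.add FTrels.zero FThat_mk cC)
  moreover have "(\<lambda>x. (0 + fiveterm (mk c') x) - fiveterm (mk c) x) =
     (\<lambda>x. padd (curly z p) (curly w r) x - curly ?m k x)"
    unfolding mc mc' by (auto simp: fiveterm_def padd_def curly_def brk_def)
  ultimately show ?thesis unfolding Phat_eq_def by simp
qed

lemma Im_tp: "Im (tp n) = 2 * pi * of_int n" by (simp add: tp_def)

theorem lemma3p1:
  fixes z w :: cpt and p r :: int
  assumes "z \<in> Cbar" and "w \<in> Cbar" and "fst z * fst w \<noteq> 1"
  shows "Phat_eq (padd (curly z p) (curly w r))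
           (if ArgB z + ArgB w \<le> - pi then curly (plus0i (fst z * fst w)) (p + r - 1)
            else if ArgB z + ArgB w \<le> pi then curly (plus0i (fst z * fst w)) (p + r)
            else curly (plus0i (fst z * fst w)) (p + r + 1))"
proof -
  note Z = Cbar_props[OF assms(1)] and W = Cbar_props[OF assms(2)]
  let ?S = "LogB z + LogB w"
  have eS: "exp ?S = fst z * fst w" by (simp add: exp_add Z W)
  have ImS: "Im ?S = ArgB z + ArgB w" by (simp add: ArgB_def)
  have lm: "LogB (plus0i (fst z * fst w)) = Ln (fst z * fst w)" by (simp add: plus0i_def LogB_def)
  have K: "Phat_eq (padd (curly z p) (curly w r)) (curly (plus0i (fst z * fst w)) k)"
    if "Ln (fst z * fst w) = ?S + tp j" "k = p + r - j" for j k
  proof (rule key[OF assms])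
    show "LogB (plus0i (fst z * fst w)) + tp k = LogB z + tp p + (LogB w + tp r)"
      unfolding lm that by (simp add: tp_def algebra_simps)
  qed
  show ?thesis
  proof (cases "ArgB z + ArgB w \<le> - pi")
    case True
    have "Ln (fst z * fst w) = Ln (exp (?S + tp 1))" by (simp add: exp_add Z W)
    also have "\<dots> = ?S + tp 1" using True Z W pi_gt_zero by (intro Ln_exp; simp add: ArgB_def Im_tp; insert pi_gt_zero; linarith)
    finally show ?thesis using True K[of 1 "p + r - 1"] by simp
  next
    case F1: False
    show ?thesis
    proof (cases "ArgB z + ArgB w \<le> pi")
      case True
      have "Ln (fst z * fst w) = Ln (exp (?S + tp 0))" by (simp add: eS Z W)
      also have "\<dots> = ?S + tp 0" using True F1 by (intro Ln_exp; simp add: ArgB_def Im_tp; insert pi_gt_zero; linarith)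
      finally show ?thesis using True F1 K[of 0 "p + r"] by simp
    next
      case False
      have "Ln (fst z * fst w) = Ln (exp (?S + tp (-1)))" by (simp add: exp_add Z W)
      also have "\<dots> = ?S + tp (-1)" using False F1 Z W pi_gt_zero by (intro Ln_exp; simp add: ArgB_def Im_tp; insert pi_gt_zero; linarith)
      finally show ?thesis using False F1 K[of "-1" "p + r + 1"] by simp
    qed
  qed
qed

end
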